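(* Let $r\ge0$. There exist constants $0<c_r\le C_r$ and $N_r$ such that the following holds. Let $n\ge N_r$, and let $K,f$ be integers with $0\le K\le r\le f/2$ and $f\le n$. For all $\lambda\vdash n$ with $n-\lambda_1=r$ and all $\mu\vdash f$ with $\mu\subset\lambda$ and $f-\mu_1=r-K$, $$c_r\left(\frac fn\right)^r f^{-K}\le\frac{d_\mu}{d_\lambda}\le C_r\left(\frac fn\right)^r f^{-K}.$$ Moreover, if $K=0$ (i.e. $\mu^*=\lambda^*$), then, with $k=n-f$ and $T(r)=r(r+1)/2$, $$\frac{d_\mu}{d_\lambda}=\left(\frac fn\right)^r\left(1-T(r)\frac{k}{fn}+E\right),\qquad |E|\le \frac{C_r}{f^2}.$$
   Context: For a partition $\lambda$, $d_\lambda$ denotes the number of standard Young tableaux of shape $\lambda$ (the dimension of the corresponding irreducible representation of the symmetric group). $\lambda_1$ is the first row length, $\lambda^*=(\lambda_2,\lambda_3,\dots)$ is $\lambda$ with the first row removed, and $\mu\subset\lambda$ means containment of Young diagrams. *)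

theory Defs
  imports Complex_Main
begin

definition is_partition :: "nat \<Rightarrow> nat list \<Rightarrow> bool" where
  "is_partition n lam \<longleftrightarrow> sorted_wrt (\<ge>) lam \<and> (\<forall>x\<in>set lam. 0 < x) \<and> sum_list lam = n"

definition young_cells :: "nat list \<Rightarrow> (nat \<times> nat) set" where
  "young_cells lam = {(i, j). i < length lam \<and> j < lam ! i}"

definition SYT :: "nat list \<Rightarrow> ((nat \<times> nat) \<Rightarrow> nat) set" where
  "SYT lam = {T. bij_betw T (young_cells lam) {1..sum_list lam}
      \<and> (\<forall>c. c \<notin> young_cells lam \<longrightarrow> T c = 0)
      \<and> (\<forall>i j. (i, Suc j) \<in> young_cells lam \<longrightarrow> T (i, j) < T (i, Suc j))
      \<and> (\<forall>i j. (Suc i, j) \<in> young_cells lam \<longrightarrow> T (i, j) < T (Suc i, j))}"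

definition dim_irrep :: "nat list \<Rightarrow> nat" where
  "dim_irrep lam = card (SYT lam)"

definition first_row :: "nat list \<Rightarrow> nat" where
  "first_row lam = (case lam of [] \<Rightarrow> 0 | x # _ \<Rightarrow> x)"

definition contained :: "nat list \<Rightarrow> nat list \<Rightarrow> bool" where
  "contained mu lam \<longleftrightarrow> young_cells mu \<subseteq> young_cells lam"

end

theory Submission
  imports Defs "HOL-Library.FuncSet"
begin


definition rnk :: "nat set \<Rightarrow> nat \<Rightarrow> nat" where
  "rnk A x = card {y\<in>A. y \<le> x}"

definition enm :: "nat set \<Rightarrow> nat \<Rightarrow> nat" where
  "enm A k = the_inv_into A (rnk A) k"

lemma rnk_mono: "finite A \<Longrightarrow> x \<le> y \<Longrightarrow> rnk A x \<le> rnk A y"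
  unfolding rnk_def by (rule card_mono) auto

lemma rnk_strict: assumes "finite A" "y \<in> A" "x < y" shows "rnk A x < rnk A y"
proof -
  have 1: "y \<in> {z\<in>A. z \<le> y} - {z\<in>A. z \<le> x}" using assms by auto
  have 2: "{z\<in>A. z \<le> x} \<subseteq> {z\<in>A. z \<le> y}" using assms by auto
  have "{z\<in>A. z \<le> x} \<subset> {z\<in>A. z \<le> y}" using 1 2 by blast
  then show ?thesis unfolding rnk_def by (rule psubset_card_mono[rotated]) (use assms in auto)
qed

lemma rnk_ge1: "finite A \<Longrightarrow> x \<in> A \<Longrightarrow> 1 \<le> rnk A x"
  unfolding rnk_def by (metis (mono_tags, lifting) One_nat_def Suc_leI card_gt_0_iff empty_iff finite_subset mem_Collect_eq order_refl subsetI)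

lemma rnk_le: "finite A \<Longrightarrow> rnk A x \<le> card A"
  unfolding rnk_def by (rule card_mono) auto

lemma rnk_inj: assumes "finite A" shows "inj_on (rnk A) A"
proof (rule inj_onI)
  fix x y assume "x \<in> A" "y \<in> A" "rnk A x = rnk A y"
  then show "x = y" using rnk_strict[OF assms]
    by (metis less_irrefl nat_neq_iff)
qed

lemma rnk_bij: assumes "finite A" shows "bij_betw (rnk A) A {1..card A}"
proof -
  have sub: "rnk A ` A \<subseteq> {1..card A}" using rnk_ge1[OF assms] rnk_le[OF assms] by auto
  have "card (rnk A ` A) = card A" using card_image[OF rnk_inj[OF assms]] .
  then have "rnk A ` A = {1..card A}"
    by (intro card_subset_eq) (use sub in auto)
  then show ?thesis using rnk_inj[OF assms] by (simp add: bij_betw_def)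
qed

lemma enm_props: assumes "finite A" "k \<in> {1..card A}"
  shows "enm A k \<in> A" "rnk A (enm A k) = k"
proof -
  have b: "bij_betw (rnk A) A {1..card A}" by (rule rnk_bij[OF assms(1)])
  show "enm A k \<in> A" unfolding enm_def
    using b assms(2) by (metis bij_betw_def the_inv_into_into order_refl)
  show "rnk A (enm A k) = k" unfolding enm_def
    using b assms(2) by (metis bij_betw_def f_the_inv_into_f)
qed

lemma enm_rnk: assumes "finite A" "x \<in> A" shows "enm A (rnk A x) = x"
  unfolding enm_def using rnk_inj[OF assms(1)] assms(2) by (simp add: the_inv_into_f_f)

lemma enm_strict: assumes "finite A" "k \<in> {1..card A}" "l \<in> {1..card A}" "k < l"
  shows "enm A k < enm A l"
proof (rule ccontr)
  assume "\<not> enm A k < enm A l"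
  then have "enm A l \<le> enm A k" by simp
  then have "rnk A (enm A l) \<le> rnk A (enm A k)" by (rule rnk_mono[OF assms(1)])
  then show False using enm_props(2)[OF assms(1)] assms(2,3,4) by simp
qed

lemma enm_inj: assumes "finite A" "k \<in> {1..card A}" "l \<in> {1..card A}" "enm A k = enm A l"
  shows "k = l"
  using enm_props(2)[OF assms(1)] assms(2,3,4) by metis

lemma enm_image: assumes "finite A" shows "enm A ` {1..card A} = A"
proof
  show "enm A ` {1..card A} \<subseteq> A" using enm_props(1)[OF assms] by auto
  show "A \<subseteq> enm A ` {1..card A}"
  proof
    fix x assume "x \<in> A"
    then have "x = enm A (rnk A x)" "rnk A x \<in> {1..card A}"
      using enm_rnk[OF assms] rnk_ge1[OF assms] rnk_le[OF assms] by auto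
    then show "x \<in> enm A ` {1..card A}" by blast
  qed
qed

lemma enm_lt: assumes "finite R" "k \<in> {1..card R}" "k \<le> card {y\<in>R. y < x}"
  shows "enm R k < x"
proof (rule ccontr)
  assume "\<not> enm R k < x"
  then have le: "x \<le> enm R k" by simp
  let ?e = "enm R k"
  have "{y\<in>R. y < x} \<subseteq> {y\<in>R. y \<le> ?e} - {?e}" using le by auto
  then have "card {y\<in>R. y < x} \<le> card ({y\<in>R. y \<le> ?e} - {?e})"
    by (intro card_mono) (use assms(1) in auto)
  also have "\<dots> = rnk R ?e - 1" unfolding rnk_def
    using enm_props(1)[OF assms(1,2)] assms(1) by (subst card_Diff_singleton) auto
  also have "\<dots> = k - 1" using enm_props(2)[OF assms(1,2)] by simp
  finally have "card {y\<in>R. y < x} \<le> k - 1" .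
  then show False using assms(2,3) by auto
qed



lemma young_cells_Cons: "young_cells (a # xs) =
   (\<lambda>j. (0, j)) ` {..<a} \<union> (\<lambda>(i, j). (Suc i, j)) ` young_cells xs"
  unfolding young_cells_def
  by (auto simp: image_iff nth_Cons split: nat.splits)

lemma young_cells_Nil[simp]: "young_cells [] = {}"
  unfolding young_cells_def by auto

lemma finite_young_cells[simp]: "finite (young_cells xs)"
proof -
  have "young_cells xs \<subseteq> {..<length xs} \<times> {..<Max (insert 0 (set xs))}"
    unfolding young_cells_def apply auto
    by (metis List.finite_set Max_ge finite_insert insertCI less_le_trans nth_mem)
  then show ?thesis by (rule finite_subset) auto
qed

lemma card_young_cells: "card (young_cells xs) = sum_list xs"
proof (induction xs)
  case Nil then show ?case by simp
next
  case (Cons a xs)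
  have d: "(\<lambda>j. (0::nat, j)) ` {..<a} \<inter> (\<lambda>(i, j). (Suc i, j)) ` young_cells xs = {}" by auto
  have i1: "inj_on (\<lambda>j. (0::nat, j)) {..<a}" by (auto simp: inj_on_def)
  have i2: "inj_on (\<lambda>(i, j). (Suc i, j)) (young_cells xs)" by (auto simp: inj_on_def)
  show ?case unfolding young_cells_Cons
    by (subst card_Un_disjoint) (use d Cons card_image[OF i1] card_image[OF i2] in auto)
qed

lemma SYT_bij: "T \<in> SYT lam \<Longrightarrow> bij_betw T (young_cells lam) {1..sum_list lam}"
  unfolding SYT_def by auto
lemma SYT_zero: "T \<in> SYT lam \<Longrightarrow> c \<notin> young_cells lam \<Longrightarrow> T c = 0"
  unfolding SYT_def by (cases c) auto
lemma SYT_row: "T \<in> SYT lam \<Longrightarrow> (i, Suc j) \<in> young_cells lam \<Longrightarrow> T (i, j) < T (i, Suc j)"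
  unfolding SYT_def by auto
lemma SYT_col: "T \<in> SYT lam \<Longrightarrow> (Suc i, j) \<in> young_cells lam \<Longrightarrow> T (i, j) < T (Suc i, j)"
  unfolding SYT_def by auto
lemma SYT_val: "T \<in> SYT lam \<Longrightarrow> c \<in> young_cells lam \<Longrightarrow> T c \<in> {1..sum_list lam}"
  using SYT_bij bij_betwE by blast
lemma SYT_inj: "T \<in> SYT lam \<Longrightarrow> inj_on T (young_cells lam)"
  using SYT_bij bij_betw_imp_inj_on by blast
lemma SYT_image: "T \<in> SYT lam \<Longrightarrow> T ` young_cells lam = {1..sum_list lam}"
  using SYT_bij bij_betw_imp_surj_on by blast

lemma SYT_Nil: "SYT [] = {\<lambda>_. 0}"
  unfolding SYT_def by (auto simp: bij_betw_def)

lemma finite_SYT: "finite (SYT lam) \<and> card (SYT lam) \<le> sum_list lam ^ sum_list lam"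
proof -
  let ?C = "young_cells lam" and ?n = "sum_list lam"
  have inj: "inj_on (\<lambda>T. restrict T ?C) (SYT lam)"
  proof (rule inj_onI)
    fix T T' assume a: "T \<in> SYT lam" "T' \<in> SYT lam" "restrict T ?C = restrict T' ?C"
    show "T = T'"
    proof
      fix c show "T c = T' c"
      proof (cases "c \<in> ?C")
        case True then show ?thesis using fun_cong[OF a(3), of c] by simp
      next
        case False then show ?thesis using SYT_zero[OF a(1)] SYT_zero[OF a(2)] by simp
      qed
    qed
  qed
  have sub: "(\<lambda>T. restrict T ?C) ` SYT lam \<subseteq> PiE ?C (\<lambda>_. {1..?n})"
    using SYT_val by fastforce
  have fin: "finite (PiE ?C (\<lambda>_. {1..?n}))" by (intro finite_PiE) auto
  have cP: "card (PiE ?C (\<lambda>_. {1..?n})) = ?n ^ ?n"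
    by (subst card_PiE) (auto simp: card_young_cells)
  have "finite ((\<lambda>T. restrict T ?C) ` SYT lam)" using finite_subset[OF sub fin] .
  then have f: "finite (SYT lam)" using finite_imageD inj by blast
  have "card (SYT lam) = card ((\<lambda>T. restrict T ?C) ` SYT lam)" using card_image[OF inj] by simp
  also have "\<dots> \<le> ?n ^ ?n" using card_mono[OF fin sub] cP by simp
  finally show ?thesis using f by simp
qed



lemma yc_Suc[simp]: "(Suc i, j) \<in> young_cells (a # xs) \<longleftrightarrow> (i, j) \<in> young_cells xs"
  unfolding young_cells_def by auto
lemma yc_0[simp]: "(0, j) \<in> young_cells (a # xs) \<longleftrightarrow> j < a"
  unfolding young_cells_def by auto

lemma yc_up: assumes "sorted_wrt (\<ge>) xs" "(Suc i, j) \<in> young_cells xs" shows "(i, j) \<in> young_cells xs"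
proof -
  have "Suc i < length xs" "j < xs ! Suc i" using assms(2) unfolding young_cells_def by auto
  moreover have "xs ! Suc i \<le> xs ! i" using assms(1) \<open>Suc i < length xs\<close>
    by (simp add: sorted_wrt_iff_nth_less)
  ultimately show ?thesis unfolding young_cells_def by auto
qed

lemma yc_left: assumes "(i, Suc j) \<in> young_cells xs" shows "(i, j) \<in> young_cells xs"
  using assms unfolding young_cells_def by auto

lemma yc_first: assumes "sorted_wrt (\<ge>) (m # xs)" "(0, j) \<in> young_cells xs" shows "j < m"
proof -
  have "0 < length xs" "j < xs ! 0" using assms(2) unfolding young_cells_def by auto
  moreover have "xs ! 0 \<le> m" using assms(1) \<open>0 < length xs\<close> by (cases xs) auto
  ultimately show ?thesis by simp
qed

definition S_of :: "nat list \<Rightarrow> (nat \<times> nat \<Rightarrow> nat) \<Rightarrow> nat set" where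
  "S_of xs T = (\<lambda>(i, j). T (Suc i, j)) ` young_cells xs"

definition P_of :: "nat list \<Rightarrow> (nat \<times> nat \<Rightarrow> nat) \<Rightarrow> (nat \<times> nat \<Rightarrow> nat)" where
  "P_of xs T = (\<lambda>c. if c \<in> young_cells xs then rnk (S_of xs T) (T (Suc (fst c), snd c)) else 0)"

definition bld :: "nat \<Rightarrow> nat list \<Rightarrow> (nat \<times> nat \<Rightarrow> nat) \<Rightarrow> nat set \<Rightarrow> (nat \<times> nat \<Rightarrow> nat)" where
  "bld m xs P S = (\<lambda>(i, j). if i = 0 then (if j < m then enm ({1..m + sum_list xs} - S) (Suc j) else 0)
      else if (i - 1, j) \<in> young_cells xs then enm S (P (i - 1, j)) else 0)"

lemma Phi_maps:
  assumes srt: "sorted_wrt (\<ge>) (m # xs)" and T: "T \<in> SYT (m # xs)"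
  shows "P_of xs T \<in> SYT xs" "S_of xs T \<subseteq> {2..m + sum_list xs}" "card (S_of xs T) = sum_list xs"
proof -
  let ?C = "young_cells (m # xs)" and ?Y = "young_cells xs" and ?n = "m + sum_list xs"
  let ?sh = "\<lambda>(i::nat, j::nat). (Suc i, j)"
  let ?S = "S_of xs T"
  have srt': "sorted_wrt (\<ge>) xs" using srt by simp
  have shC: "?sh ` ?Y \<subseteq> ?C" by auto
  have injT: "inj_on T ?C" by (rule SYT_inj[OF T])
  have injsh: "inj_on ?sh ?Y" by (auto simp: inj_on_def)
  have Sdef: "?S = T ` (?sh ` ?Y)" unfolding S_of_def by (auto simp: image_iff)
  have injTs: "inj_on (\<lambda>(i, j). T (Suc i, j)) ?Y"
  proof (rule inj_onI, clarify)
    fix a b c d assume "(a, b) \<in> ?Y" "(c, d) \<in> ?Y" "T (Suc a, b) = T (Suc c, d)"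
    then show "a = c \<and> b = d" using injT by (auto dest: inj_onD)
  qed
  have bS: "bij_betw (\<lambda>(i, j). T (Suc i, j)) ?Y ?S"
    unfolding S_of_def using injTs by (simp add: bij_betw_def)
  show cS: "card ?S = sum_list xs"
    using bij_betw_same_card[OF bS] card_young_cells by simp
  have finS: "finite ?S" unfolding S_of_def by simp
  show "?S \<subseteq> {2..?n}"
  proof
    fix x assume "x \<in> ?S"
    then obtain i j where ij: "(i, j) \<in> ?Y" "x = T (Suc i, j)" unfolding S_of_def by auto
    have x1: "x \<in> {1..?n}" using SYT_val[OF T, of "(Suc i, j)"] ij by simp
    have "(i, j) \<in> ?C"
    proof (cases i)
      case 0 then show ?thesis using yc_first[OF srt] ij by simp
    next
      case (Suc i') then show ?thesis using yc_up[OF srt'] ij by simp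
    qed
    then have "1 \<le> T (i, j)" using SYT_val[OF T] by auto
    moreover have "T (i, j) < x" using SYT_col[OF T, of i j] ij by simp
    ultimately show "x \<in> {2..?n}" using x1 by auto
  qed
  have vS: "\<And>i j. (i, j) \<in> ?Y \<Longrightarrow> T (Suc i, j) \<in> ?S" unfolding S_of_def by auto
  show "P_of xs T \<in> SYT xs" unfolding SYT_def
  proof (intro CollectI conjI allI impI)
    have "bij_betw (rnk ?S \<circ> (\<lambda>(i, j). T (Suc i, j))) ?Y {1..card ?S}"
      by (rule bij_betw_trans[OF bS rnk_bij[OF finS]])
    moreover have "\<And>c. c \<in> ?Y \<Longrightarrow> P_of xs T c = (rnk ?S \<circ> (\<lambda>(i, j). T (Suc i, j))) c"
      by (auto simp: P_of_def split: prod.splits)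
    ultimately show "bij_betw (P_of xs T) ?Y {1..sum_list xs}"
      using cS bij_betw_cong by (metis (no_types, lifting))
  next
    fix c assume "c \<notin> ?Y" then show "P_of xs T c = 0" by (simp add: P_of_def)
  next
    fix i j assume a: "(i, Suc j) \<in> ?Y"
    have "T (Suc i, j) < T (Suc i, Suc j)" using SYT_row[OF T, of "Suc i" j] a by simp
    then show "P_of xs T (i, j) < P_of xs T (i, Suc j)"
      using a yc_left[OF a] rnk_strict[OF finS vS[OF a]] by (simp add: P_of_def)
  next
    fix i j assume a: "(Suc i, j) \<in> ?Y"
    have "T (Suc i, j) < T (Suc (Suc i), j)" using SYT_col[OF T, of "Suc i" j] a by simp
    then show "P_of xs T (i, j) < P_of xs T (Suc i, j)"
      using a yc_up[OF srt' a] rnk_strict[OF finS vS[OF a]] by (simp add: P_of_def)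
  qed
qed



lemma row_strict:
  assumes "\<And>k. Suc k < m \<Longrightarrow> g k < g (Suc k)" "j < j'" "j' < m"
  shows "g j < (g j' :: nat)"
  using assms(2,3)
proof (induction j')
  case 0 then show ?case by simp
next
  case (Suc j')
  show ?case
  proof (cases "j = j'")
    case True then show ?thesis using assms(1) Suc by simp
  next
    case False then have "g j < g j'" using Suc by simp
    also have "g j' < g (Suc j')" using assms(1) Suc by simp
    finally show ?thesis .
  qed
qed

lemma P_row0: assumes P: "P \<in> SYT xs" and "(0, j) \<in> young_cells xs" shows "Suc j \<le> P (0, j)"
  using assms(2)
proof (induction j)
  case 0 then show ?case using SYT_val[OF P] by force
next
  case (Suc j)
  from Suc.prems have "(0, j) \<in> young_cells xs" by (rule yc_left)
  then show ?case using Suc SYT_row[OF P, of 0 j] by simp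
qed

lemma build_Phi:
  assumes srt: "sorted_wrt (\<ge>) (m # xs)" and T: "T \<in> SYT (m # xs)"
  shows "bld m xs (P_of xs T) (S_of xs T) = T"
proof -
  let ?C = "young_cells (m # xs)" and ?Y = "young_cells xs" and ?n = "m + sum_list xs"
  let ?sh = "\<lambda>(i::nat, j::nat). (Suc i, j)"
  let ?row = "(\<lambda>j. (0::nat, j)) ` {..<m}"
  let ?S = "S_of xs T"
  let ?R = "{1..?n} - ?S"
  have C: "?C = ?row \<union> ?sh ` ?Y" by (rule young_cells_Cons)
  have injT: "inj_on T ?C" by (rule SYT_inj[OF T])
  have imT: "T ` ?C = {1..?n}" using SYT_image[OF T] by simp
  have Sdef: "?S = T ` (?sh ` ?Y)" unfolding S_of_def by (auto simp: image_iff)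
  have disj: "T ` ?row \<inter> T ` (?sh ` ?Y) = {}"
  proof (rule ccontr)
    assume "\<not> ?thesis"
    then obtain a b c where abc: "a < m" "(b, c) \<in> ?Y" "T (0, a) = T (Suc b, c)" by auto
    then have "(0, a) = (Suc b, c)" using inj_onD[OF injT abc(3)] by simp
    then show False by simp
  qed
  have U: "T ` ?row \<union> T ` (?sh ` ?Y) = {1..?n}" using imT C by (simp add: image_Un)
  have R: "?R = T ` ?row"
  proof -
    have "?R = (T ` ?row \<union> T ` (?sh ` ?Y)) - T ` (?sh ` ?Y)" using U Sdef by simp
    also have "\<dots> = T ` ?row" using disj by (simp add: Un_Diff Diff_triv)
    finally show ?thesis .
  qed
  have finR: "finite ?R" by simp
  have finS: "finite ?S" unfolding S_of_def by simp
  have mono: "\<And>j j'. j < j' \<Longrightarrow> j' < m \<Longrightarrow> T (0, j) < T (0, j')"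
  proof -
    fix j j' :: nat assume jj: "j < j'" "j' < m"
    have st: "\<And>k. Suc k < m \<Longrightarrow> T (0, k) < T (0, Suc k)" using SYT_row[OF T] by simp
    show "T (0, j) < T (0, j')" by (rule row_strict[where g = "\<lambda>j. T (0, j)", OF st jj])
  qed
  have rk: "rnk ?R (T (0, j)) = Suc j" if j: "j < m" for j
  proof -
    have "{y \<in> ?R. y \<le> T (0, j)} = (\<lambda>j'. T (0, j')) ` {0..j}"
    proof
      show "(\<lambda>j'. T (0, j')) ` {0..j} \<subseteq> {y \<in> ?R. y \<le> T (0, j)}"
      proof
        fix y assume "y \<in> (\<lambda>j'. T (0, j')) ` {0..j}"
        then obtain j' where "j' \<le> j" "y = T (0, j')" by auto
        then show "y \<in> {y \<in> ?R. y \<le> T (0, j)}" using R j mono[of j' j]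
          by (cases "j' = j") auto
      qed
      show "{y \<in> ?R. y \<le> T (0, j)} \<subseteq> (\<lambda>j'. T (0, j')) ` {0..j}"
      proof
        fix y assume y: "y \<in> {y \<in> ?R. y \<le> T (0, j)}"
        have yR: "y \<in> ?R" "y \<le> T (0, j)" using y by auto
        have "y \<in> T ` ?row" using yR(1) unfolding R .
        then obtain j' where "j' < m" "y = T (0, j')" by auto
        then have "T (0, j') \<le> T (0, j)" using yR(2) by simp
        have "j' \<le> j"
        proof (rule ccontr)
          assume "\<not> j' \<le> j"
          then have "T (0, j) < T (0, j')" using mono \<open>j' < m\<close> by simp
          then show False using \<open>T (0, j') \<le> T (0, j)\<close> by simp
        qed
        then show "y \<in> (\<lambda>j'. T (0, j')) ` {0..j}" using \<open>y = T (0, j')\<close> by auto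
      qed
    qed
    moreover have "inj_on (\<lambda>j'. T (0, j')) {0..j}"
    proof (rule inj_onI)
      fix a b assume ab: "a \<in> {0..j}" "b \<in> {0..j}" "T (0, a) = T (0, b)"
      then have am: "a < m" "b < m" using j by auto
      show "a = b"
      proof (rule linorder_cases[of a b])
        assume "a < b" then show ?thesis using mono[of a b] am ab(3) by simp
      next
        assume "b < a" then show ?thesis using mono[of b a] am ab(3) by simp
      qed
    qed
    ultimately show ?thesis unfolding rnk_def by (simp add: card_image)
  qed
  show ?thesis
  proof
    fix c
    obtain i j :: nat where c: "c = (i, j)" by force
    show "bld m xs (P_of xs T) ?S c = T c"
    proof (cases i)
      case 0
      show ?thesis
      proof (cases "j < m")
        case True
        have "T (0, j) \<in> ?R" using R True by auto
        then have "enm ?R (rnk ?R (T (0, j))) = T (0, j)" by (rule enm_rnk[OF finR])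
        then have "enm ?R (Suc j) = T (0, j)" using rk[OF True] by simp
        then show ?thesis using c 0 True by (simp add: bld_def)
      next
        case False
        then show ?thesis using c 0 SYT_zero[OF T, of "(0, j)"] by (simp add: bld_def)
      qed
    next
      case (Suc i')
      show ?thesis
      proof (cases "(i', j) \<in> ?Y")
        case True
        have "T (Suc i', j) \<in> ?S" using True unfolding S_of_def by force
        then show ?thesis using c Suc True enm_rnk[OF finS] by (simp add: bld_def P_of_def)
      next
        case False
        then show ?thesis using c Suc SYT_zero[OF T, of "(Suc i', j)"] by (simp add: bld_def)
      qed
    qed
  qed
qed

lemma Phi_build:
  assumes P: "P \<in> SYT xs" and S: "S \<subseteq> {1..m + sum_list xs}" "card S = sum_list xs"
  shows "S_of xs (bld m xs P S) = S" "P_of xs (bld m xs P S) = P"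
proof -
  let ?Y = "young_cells xs"
  have finS: "finite S" by (rule finite_subset[OF S(1)]) simp
  have "S_of xs (bld m xs P S) = (\<lambda>c. enm S (P c)) ` ?Y"
    unfolding S_of_def by (rule image_cong) (auto simp: bld_def)
  also have "\<dots> = enm S ` (P ` ?Y)" by (simp add: image_image)
  also have "\<dots> = S" using SYT_image[OF P] S(2) enm_image[OF finS] by simp
  finally show 1: "S_of xs (bld m xs P S) = S" .
  show "P_of xs (bld m xs P S) = P"
  proof
    fix c show "P_of xs (bld m xs P S) c = P c"
    proof (cases "c \<in> ?Y")
      case True
      have "P c \<in> {1..card S}" using SYT_val[OF P True] S(2) by simp
      then show ?thesis using True 1 enm_props(2)[OF finS]
        by (cases c) (simp add: P_of_def bld_def)
    next
      case False then show ?thesis using SYT_zero[OF P False] by (simp add: P_of_def)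
    qed
  qed
qed



definition good :: "nat \<Rightarrow> nat list \<Rightarrow> nat set \<Rightarrow> bool" where
  "good m xs S \<longleftrightarrow> S \<subseteq> {1..m + sum_list xs} \<and> card S = sum_list xs \<and>
     (\<forall>x\<in>S. min (rnk S x) m \<le> card {y \<in> {1..m + sum_list xs} - S. y < x})"

lemma bld_SYT:
  assumes srt: "sorted_wrt (\<ge>) (m # xs)" and P: "P \<in> SYT xs" and G: "good m xs S"
  shows "bld m xs P S \<in> SYT (m # xs)"
proof -
  let ?C = "young_cells (m # xs)" and ?Y = "young_cells xs" and ?n = "m + sum_list xs"
  let ?sh = "\<lambda>(i::nat, j::nat). (Suc i, j)"
  let ?row = "(\<lambda>j. (0::nat, j)) ` {..<m}"
  let ?R = "{1..?n} - S"
  let ?B = "bld m xs P S"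
  have S: "S \<subseteq> {1..?n}" "card S = sum_list xs" using G unfolding good_def by auto
  have finS: "finite S" by (rule finite_subset[OF S(1)]) simp
  have cR: "card ?R = m" using S finS by (subst card_Diff_subset) auto
  have finR: "finite ?R" by simp
  have C: "?C = ?row \<union> ?sh ` ?Y" by (rule young_cells_Cons)
  have PY: "P ` ?Y = {1..card S}" using SYT_image[OF P] S by simp
  have im1: "?B ` ?row = ?R"
  proof -
    have "?B ` ?row = enm ?R ` (Suc ` {..<m})" by (auto simp: bld_def image_iff)
    also have "Suc ` {..<m} = {1..card ?R}" using cR by (simp add: image_Suc_lessThan)
    also have "enm ?R ` {1..card ?R} = ?R" by (rule enm_image[OF finR])
    finally show ?thesis .
  qed
  have im2: "?B ` (?sh ` ?Y) = S"
  proof -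
    have "?B ` (?sh ` ?Y) = (?B \<circ> ?sh) ` ?Y" by (simp add: image_comp)
    also have "\<dots> = (\<lambda>c. enm S (P c)) ` ?Y" by (rule image_cong) (auto simp: bld_def)
    also have "\<dots> = enm S ` (P ` ?Y)" by (simp add: image_image)
    finally have "?B ` (?sh ` ?Y) = enm S ` (P ` ?Y)" .
    then show ?thesis using PY enm_image[OF finS] by simp
  qed
  have imB: "?B ` ?C = {1..?n}"
  proof -
    have "?B ` ?C = ?B ` ?row \<union> ?B ` (?sh ` ?Y)" unfolding C by (rule image_Un)
    also have "\<dots> = ?R \<union> S" by (simp only: im1 im2)
    also have "\<dots> = {1..?n}" using S(1) by blast
    finally show ?thesis .
  qed
  have cC: "card ?C = ?n" using card_young_cells[of "m # xs"] by simp
  have injB: "inj_on ?B ?C"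
    by (rule eq_card_imp_inj_on) (use imB cC in auto)
  have inS: "\<And>c. c \<in> ?Y \<Longrightarrow> enm S (P c) \<in> S" "\<And>c. c \<in> ?Y \<Longrightarrow> P c \<in> {1..card S}"
    using enm_props(1)[OF finS] SYT_val[OF P] S(2) by auto
  show ?thesis unfolding SYT_def
  proof (intro CollectI conjI allI impI)
    show "bij_betw ?B ?C {1..sum_list (m # xs)}" using injB imB by (simp add: bij_betw_def)
  next
    fix c assume nc: "c \<notin> ?C"
    obtain i j :: nat where c: "c = (i, j)" by force
    show "?B c = 0"
    proof (cases i)
      case 0 with nc c show ?thesis by (simp add: bld_def)
    next
      case (Suc i') with nc c show ?thesis by (simp add: bld_def)
    qed
  next
    fix i j assume a: "(i, Suc j) \<in> ?C"
    show "?B (i, j) < ?B (i, Suc j)"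
    proof (cases i)
      case 0
      then have "Suc j < m" using a by simp
      then show ?thesis using 0 enm_strict[OF finR, of "Suc j" "Suc (Suc j)"] cR by (simp add: bld_def)
    next
      case (Suc i')
      then have a': "(i', Suc j) \<in> ?Y" using a by simp
      have l: "(i', j) \<in> ?Y" using yc_left[OF a'] .
      have "P (i', j) < P (i', Suc j)" using SYT_row[OF P a'] .
      then show ?thesis using Suc a' l enm_strict[OF finS] inS(2)[OF a'] inS(2)[OF l]
        by (simp add: bld_def)
    qed
  next
    fix i j assume a: "(Suc i, j) \<in> ?C"
    show "?B (i, j) < ?B (Suc i, j)"
    proof (cases i)
      case 0
      then have a': "(0, j) \<in> ?Y" using a by simp
      have jm: "j < m" using yc_first[OF srt a'] .
      let ?x = "enm S (P (0, j))"
      have xS: "?x \<in> S" using inS(1)[OF a'] .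
      have rx: "rnk S ?x = P (0, j)" using enm_props(2)[OF finS inS(2)[OF a']] .
      have "Suc j \<le> min (rnk S ?x) m" using rx P_row0[OF P a'] jm by simp
      also have "\<dots> \<le> card {y \<in> ?R. y < ?x}" using G xS unfolding good_def by blast
      finally have "enm ?R (Suc j) < ?x" using enm_lt[OF finR] cR jm by simp
      then show ?thesis using 0 a' jm by (simp add: bld_def)
    next
      case (Suc i')
      then have a': "(Suc i', j) \<in> ?Y" using a by simp
      show ?thesis
      proof (cases "(i', j) \<in> ?Y")
        case True
        have "P (i', j) < P (Suc i', j)" using SYT_col[OF P a'] .
        then show ?thesis using Suc a' True enm_strict[OF finS] inS(2)[OF a'] inS(2)[OF True]
          by (simp add: bld_def)
      next
        case False
        have "enm S (P (Suc i', j)) \<in> S" using inS(1)[OF a'] .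
        then have "0 < enm S (P (Suc i', j))" using S(1) by force
        then show ?thesis using Suc a' False by (simp add: bld_def)
      qed
    qed
  qed
qed



lemma count_upper:
  assumes srt: "sorted_wrt (\<ge>) (m # xs)"
  shows "card (SYT (m # xs)) \<le> card (SYT xs) * ((m + sum_list xs - 1) choose sum_list xs)"
proof -
  let ?n = "m + sum_list xs" and ?r = "sum_list xs"
  let ?Sub = "{S. S \<subseteq> {2..?n} \<and> card S = ?r}"
  have inj: "inj_on (\<lambda>T. (P_of xs T, S_of xs T)) (SYT (m # xs))"
  proof (rule inj_onI)
    fix T T' assume a: "T \<in> SYT (m # xs)" "T' \<in> SYT (m # xs)"
      "(P_of xs T, S_of xs T) = (P_of xs T', S_of xs T')"
    have e: "P_of xs T = P_of xs T'" "S_of xs T = S_of xs T'" using a(3) by simp_all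
    have "T = bld m xs (P_of xs T) (S_of xs T)" by (rule sym[OF build_Phi[OF srt a(1)]])
    also have "\<dots> = bld m xs (P_of xs T') (S_of xs T')" by (simp only: e)
    also have "\<dots> = T'" by (rule build_Phi[OF srt a(2)])
    finally show "T = T'" .
  qed
  have sub: "(\<lambda>T. (P_of xs T, S_of xs T)) ` SYT (m # xs) \<subseteq> SYT xs \<times> ?Sub"
  proof (rule image_subsetI)
    fix T assume T: "T \<in> SYT (m # xs)"
    show "(P_of xs T, S_of xs T) \<in> SYT xs \<times> ?Sub"
      using Phi_maps[OF srt T] by simp
  qed
  have fin: "finite (SYT xs \<times> ?Sub)"
    using finite_SYT[of xs] by (intro finite_cartesian_product) auto
  have "card (SYT (m # xs)) \<le> card (SYT xs \<times> ?Sub)" by (rule card_inj_on_le[OF inj sub fin])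
  also have "\<dots> = card (SYT xs) * card ?Sub" by (rule card_cartesian_product)
  also have "card ?Sub = card {2..?n} choose ?r" by (rule n_subsets) simp
  also have "card {2..?n} = ?n - 1" by simp
  finally show ?thesis .
qed

lemma count_lower:
  assumes srt: "sorted_wrt (\<ge>) (m # xs)"
  shows "card (SYT xs) * card {S. good m xs S} \<le> card (SYT (m # xs))"
proof -
  let ?G = "{S. good m xs S}"
  have inj: "inj_on (\<lambda>(P, S). bld m xs P S) (SYT xs \<times> ?G)"
  proof (rule inj_onI, clarify)
    fix P S P' S' assume a: "P \<in> SYT xs" "good m xs S" "P' \<in> SYT xs" "good m xs S'"
      "bld m xs P S = bld m xs P' S'"
    have g: "S \<subseteq> {1..m + sum_list xs}" "card S = sum_list xs"
      "S' \<subseteq> {1..m + sum_list xs}" "card S' = sum_list xs" using a(2,4) unfolding good_def by auto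
    have "S = S'" using Phi_build(1)[OF a(1) g(1,2)] Phi_build(1)[OF a(3) g(3,4)] a(5) by simp
    moreover have "P = P'" using Phi_build(2)[OF a(1) g(1,2)] Phi_build(2)[OF a(3) g(3,4)] a(5) by simp
    ultimately show "P = P' \<and> S = S'" by simp
  qed
  have sub: "(\<lambda>(P, S). bld m xs P S) ` (SYT xs \<times> ?G) \<subseteq> SYT (m # xs)"
    using bld_SYT[OF srt] by auto
  have "card (SYT xs \<times> ?G) \<le> card (SYT (m # xs))"
    by (rule card_inj_on_le[OF inj sub]) (use finite_SYT in auto)
  then show ?thesis by (simp add: card_cartesian_product)
qed

lemma finite_good: "finite {S. good m xs S}"
proof -
  have "{S. good m xs S} \<subseteq> Pow {1..m + sum_list xs}" unfolding good_def by auto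
  then show ?thesis by (rule finite_subset) simp
qed

lemma good_top: assumes "1 \<le> m" shows "good m xs {m + 1..m + sum_list xs}"
proof -
  let ?S = "{m + 1..m + sum_list xs}"
  have "\<And>x. x \<in> ?S \<Longrightarrow> {y \<in> {1..m + sum_list xs} - ?S. y < x} = {1..m}" by auto
  then show ?thesis unfolding good_def using assms by auto
qed

lemma card_ge2_obtain: assumes "2 \<le> card A" obtains a b where "a \<in> A" "b \<in> A" "a \<noteq> b"
proof -
  have "A \<noteq> {}" using assms by auto
  then obtain a where a: "a \<in> A" by auto
  have "finite A" by (rule ccontr) (use assms in simp)
  then have c1: "card (A - {a}) \<ge> 1" using assms a by simp
  have "A - {a} \<noteq> {}"
  proof
    assume e: "A - {a} = {}"
    show False using c1 unfolding e by simp
  qed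
  then obtain b where "b \<in> A - {a}" by auto
  then show ?thesis using that a by auto
qed

lemma good_G:
  assumes S: "S \<subseteq> {2..m + sum_list xs}" "card S = sum_list xs" "card (S \<inter> {2..2 * sum_list xs}) \<le> 1"
  shows "good m xs S"
proof -
  let ?n = "m + sum_list xs" and ?r = "sum_list xs"
  let ?R = "{1..?n} - S"
  have finS: "finite S" by (rule finite_subset[OF S(1)]) simp
  have "min (rnk S x) m \<le> card {y \<in> ?R. y < x}" if x: "x \<in> S" for x
  proof (cases "rnk S x \<le> 1")
    case True
    have "1 \<in> {y \<in> ?R. y < x}" using x S(1) by auto
    moreover have "finite {y \<in> ?R. y < x}" by simp
    ultimately have "0 < card {y \<in> ?R. y < x}" by (subst card_gt_0_iff) blast
    then have "1 \<le> card {y \<in> ?R. y < x}" by simp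
    then show ?thesis using True by simp
  next
    case False
    have x2r: "2 * ?r < x"
    proof (rule ccontr)
      assume "\<not> 2 * ?r < x"
      then have "{y \<in> S. y \<le> x} \<subseteq> S \<inter> {2..2 * ?r}" using S(1) by auto
      then have "card {y \<in> S. y \<le> x} \<le> card (S \<inter> {2..2 * ?r})" by (intro card_mono) auto
      then show False using False S(3) unfolding rnk_def by simp
    qed
    have xn: "x \<le> ?n" using x S(1) by auto
    have "{1..2 * ?r} - (S \<inter> {2..2 * ?r}) \<subseteq> {y \<in> ?R. y < x}" using x2r xn S(1) by auto
    then have "card ({1..2 * ?r} - (S \<inter> {2..2 * ?r})) \<le> card {y \<in> ?R. y < x}"
      by (intro card_mono) auto
    moreover have "card {1..2 * ?r} - card (S \<inter> {2..2 * ?r}) \<le> card ({1..2 * ?r} - (S \<inter> {2..2 * ?r}))"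
      by (rule diff_card_le_card_Diff) simp
    moreover have "rnk S x \<le> ?r" using rnk_le[OF finS] S(2) by metis
    moreover have "1 \<le> ?r" using False rnk_le[OF finS, of x] S(2) by simp
    ultimately show ?thesis using S(3) by simp
  qed
  then show ?thesis unfolding good_def using S(1,2) by auto
qed



lemma choose_le_pow: "(n choose k) \<le> n ^ k"
proof -
  have "(n choose k) * 1 \<le> (n choose k) * fact k" by (intro mult_le_mono2) (simp add: fact_ge_1)
  also have "\<dots> \<le> n ^ k" by (rule binomial_fact_pow)
  finally show ?thesis by simp
qed

lemma bad_count:
  "card {S. S \<subseteq> {2..n} \<and> card S = r \<and> 2 \<le> card (S \<inter> {2..2 * r})} * n ^ 2 \<le> (2 * r) ^ 2 * n ^ r"
proof (cases "r \<le> 1")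
  case True
  have e: "{S. S \<subseteq> {2..n} \<and> card S = r \<and> 2 \<le> card (S \<inter> {2..2 * r})} = {}"
  proof (rule ccontr)
    assume "\<not> ?thesis"
    then obtain S where "2 \<le> card (S \<inter> {2..2 * r})" by auto
    moreover have "card (S \<inter> {2..2 * r}) \<le> card {2..2 * r}" by (intro card_mono) auto
    ultimately show False using True by simp
  qed
  show ?thesis unfolding e by simp
next
  case False
  let ?W = "{2..2 * r}"
  let ?I = "{(a, b). a \<in> ?W \<and> b \<in> ?W \<and> a \<noteq> b}"
  let ?F = "\<lambda>(a::nat, b::nat). {S. S \<subseteq> {1..n} \<and> card S = r \<and> a \<in> S \<and> b \<in> S}"
  let ?Bad = "{S. S \<subseteq> {2..n} \<and> card S = r \<and> 2 \<le> card (S \<inter> {2..2 * r})}"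
  have finI: "finite ?I" by (rule finite_subset[of _ "?W \<times> ?W"]) auto
  have sub: "?Bad \<subseteq> (\<Union>p\<in>?I. ?F p)"
  proof
    fix S assume S: "S \<in> ?Bad"
    then obtain a b where ab: "a \<in> S \<inter> ?W" "b \<in> S \<inter> ?W" "a \<noteq> b"
      using card_ge2_obtain[of "S \<inter> ?W"] by auto
    then have "S \<in> ?F (a, b)" "(a, b) \<in> ?I" using S by auto
    then show "S \<in> (\<Union>p\<in>?I. ?F p)" by blast
  qed
  have cF: "card (?F p) \<le> n ^ (r - 2)" if p: "p \<in> ?I" for p
  proof -
    obtain a b where pab: "p = (a, b)" "a \<noteq> b" using p by auto
    let ?T = "{T. T \<subseteq> {1..n} \<and> card T = r - 2}"
    have inj: "inj_on (\<lambda>S. S - {a, b}) (?F p)"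
    proof (rule inj_onI)
      fix S S' assume "S \<in> ?F p" "S' \<in> ?F p" "S - {a, b} = S' - {a, b}"
      then show "S = S'" using pab by auto
    qed
    have im: "(\<lambda>S. S - {a, b}) ` (?F p) \<subseteq> ?T"
    proof
      fix T assume "T \<in> (\<lambda>S. S - {a, b}) ` (?F p)"
      then obtain S where S: "S \<in> ?F p" "T = S - {a, b}" by auto
      have fS: "finite S" using S(1) pab by (auto intro: finite_subset)
      have "card T = card S - card {a, b}" using S pab fS by (subst S(2), subst card_Diff_subset) auto
      then show "T \<in> ?T" using S pab by auto
    qed
    have "card (?F p) \<le> card ?T" by (rule card_inj_on_le[OF inj im]) simp
    also have "card ?T = n choose (r - 2)" using n_subsets[of "{1..n}" "r - 2"] by simp
    also have "\<dots> \<le> n ^ (r - 2)" by (rule choose_le_pow)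
    finally show ?thesis .
  qed
  have cI: "card ?I \<le> (2 * r) ^ 2"
  proof -
    have "card ?I \<le> card (?W \<times> ?W)" by (intro card_mono) auto
    also have "\<dots> = (2 * r - 1) ^ 2" by (simp add: card_cartesian_product power2_eq_square)
    also have "\<dots> \<le> (2 * r) ^ 2" by (intro power_mono) auto
    finally show ?thesis .
  qed
  have "card ?Bad \<le> card (\<Union>p\<in>?I. ?F p)"
    by (rule card_mono[OF _ sub]) (use finI in auto)
  also have "\<dots> \<le> (\<Sum>p\<in>?I. card (?F p))" by (rule card_UN_le[OF finI])
  also have "\<dots> \<le> (\<Sum>p\<in>?I. n ^ (r - 2))" by (rule sum_mono) (rule cF)
  also have "\<dots> = card ?I * n ^ (r - 2)" by simp
  also have "\<dots> \<le> (2 * r) ^ 2 * n ^ (r - 2)" by (intro mult_le_mono1 cI)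
  finally have "card ?Bad * n ^ 2 \<le> (2 * r) ^ 2 * n ^ (r - 2) * n ^ 2" by (rule mult_le_mono1)
  also have "\<dots> = (2 * r) ^ 2 * n ^ r"
  proof -
    have rr: "(r - 2) + 2 = r" using False by simp
    have "n ^ (r - 2) * n ^ 2 = n ^ r" by (metis rr power_add)
    then show ?thesis by (simp only: mult.assoc)
  qed
  finally show ?thesis .
qed

lemma comb_main:
  assumes srt: "sorted_wrt (\<ge>) (m # xs)" and m: "1 \<le> m"
  shows "dim_irrep (m # xs) \<le> dim_irrep xs * ((m + sum_list xs - 1) choose sum_list xs)"
    "dim_irrep xs \<le> dim_irrep (m # xs)"
    "\<exists>e. e * (m + sum_list xs) ^ 2 \<le> (2 * sum_list xs) ^ 2 * (m + sum_list xs) ^ sum_list xs \<and>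
        e \<le> ((m + sum_list xs - 1) choose sum_list xs) \<and>
        dim_irrep xs * (((m + sum_list xs - 1) choose sum_list xs) - e) \<le> dim_irrep (m # xs)"
proof -
  let ?n = "m + sum_list xs" and ?r = "sum_list xs"
  let ?Good = "{S. good m xs S}"
  show "dim_irrep (m # xs) \<le> dim_irrep xs * ((?n - 1) choose ?r)"
    unfolding dim_irrep_def by (rule count_upper[OF srt])
  have low: "dim_irrep xs * card ?Good \<le> dim_irrep (m # xs)"
    unfolding dim_irrep_def by (rule count_lower[OF srt])
  have "{m + 1..?n} \<in> ?Good" using good_top[OF m] by simp
  then have "1 \<le> card ?Good" using finite_good[of m xs]
    by (metis One_nat_def Suc_leI card_gt_0_iff empty_iff)
  then have h: "dim_irrep xs * 1 \<le> dim_irrep xs * card ?Good" by (rule mult_le_mono2)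
  show "dim_irrep xs \<le> dim_irrep (m # xs)" using order_trans[OF h low] by simp
  let ?Sub = "{S. S \<subseteq> {2..?n} \<and> card S = ?r}"
  let ?Bad = "{S. S \<subseteq> {2..?n} \<and> card S = ?r \<and> 2 \<le> card (S \<inter> {2..2 * ?r})}"
  have finSub: "finite ?Sub" by (rule finite_subset[of _ "Pow {2..?n}"]) auto
  have cSub: "card ?Sub = (?n - 1) choose ?r" using n_subsets[of "{2..?n}" ?r] by simp
  have BS: "?Bad \<subseteq> ?Sub" by auto
  have GG: "?Sub - ?Bad \<subseteq> ?Good"
  proof
    fix S assume "S \<in> ?Sub - ?Bad"
    then show "S \<in> ?Good" using good_G[of S m xs] by auto
  qed
  have "card ?Sub - card ?Bad \<le> card (?Sub - ?Bad)" by (rule diff_card_le_card_Diff) (rule finite_subset[OF BS finSub])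
  also have "\<dots> \<le> card ?Good" by (rule card_mono[OF finite_good GG])
  finally have "(?n - 1 choose ?r) - card ?Bad \<le> card ?Good" using cSub by simp
  then have "dim_irrep xs * ((?n - 1 choose ?r) - card ?Bad) \<le> dim_irrep xs * card ?Good"
    by (rule mult_le_mono2)
  then have L: "dim_irrep xs * ((?n - 1 choose ?r) - card ?Bad) \<le> dim_irrep (m # xs)"
    using low by (rule order_trans)
  moreover have "card ?Bad \<le> (?n - 1 choose ?r)"
    using card_mono[OF finSub BS] cSub by simp
  ultimately show "\<exists>e. e * ?n ^ 2 \<le> (2 * ?r) ^ 2 * ?n ^ ?r \<and> e \<le> (?n - 1 choose ?r) \<and>
        dim_irrep xs * ((?n - 1 choose ?r) - e) \<le> dim_irrep (m # xs)"
    using bad_count[of ?n ?r] L by (intro exI[of _ "card ?Bad"]) auto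
qed



lemma prod_bounds:
  fixes x :: "nat \<Rightarrow> real"
  assumes "finite I" "\<And>i. i \<in> I \<Longrightarrow> 0 \<le> x i \<and> x i \<le> 1"
  shows "1 - sum x I \<le> (\<Prod>i\<in>I. 1 - x i) \<and> (\<Prod>i\<in>I. 1 - x i) \<le> 1 - sum x I + (sum x I)^2 / 2"
  using assms
proof (induction I rule: finite_induct)
  case empty then show ?case by simp
next
  case (insert j F)
  let ?P = "\<Prod>i\<in>F. 1 - x i" and ?S = "sum x F" and ?y = "x j"
  have IH: "1 - ?S \<le> ?P" "?P \<le> 1 - ?S + ?S^2/2" using insert by auto
  have y: "0 \<le> ?y" "?y \<le> 1" using insert by auto
  have S0: "0 \<le> ?S" using insert by (intro sum_nonneg) auto
  have eqP: "(\<Prod>i\<in>insert j F. 1 - x i) = (1 - ?y) * ?P" using insert by simp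
  have eqS: "sum x (insert j F) = ?y + ?S" using insert by simp
  have l: "(1 - ?y) * (1 - ?S) \<le> (1 - ?y) * ?P" by (rule mult_left_mono[OF IH(1)]) (use y in simp)
  have u: "(1 - ?y) * ?P \<le> (1 - ?y) * (1 - ?S + ?S^2/2)" by (rule mult_left_mono[OF IH(2)]) (use y in simp)
  have l2: "1 - (?y + ?S) \<le> (1 - ?y) * (1 - ?S)" using y S0 by (simp add: algebra_simps)
  have u2: "(1 - ?y) * (1 - ?S + ?S^2/2) \<le> 1 - (?y + ?S) + (?y + ?S)^2/2"
  proof -
    have "0 \<le> ?y^2/2 + ?y * ?S^2/2" using y S0 by simp
    then show ?thesis by (simp add: algebra_simps power2_eq_square)
  qed
  show ?case unfolding eqP eqS using l u l2 u2 by linarith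
qed

lemma sum_lin: "(\<Sum>i<s. real i + 1) = real s * (real s + 1) / 2"
  by (induction s) (simp_all add: field_simps)

lemma binom_prod:
  assumes "1 \<le> p"
  shows "real ((p - 1) choose s) * fact s / real p ^ s = (\<Prod>i<s. 1 - (real i + 1) / real p)"
proof -
  have "real ((p - 1) choose s) * fact s = (\<Prod>i=0..<s. real (p - 1) - real i)"
    by (simp add: binomial_gbinomial gbinomial_mult_fact')
  also have "\<dots> = (\<Prod>i<s. real p - (real i + 1))" using assms
    by (intro prod.cong) (auto simp: of_nat_diff)
  finally have e: "real ((p - 1) choose s) * fact s = (\<Prod>i<s. real p - (real i + 1))" .
  have "real p ^ s = (\<Prod>i<s. real p)" by simp
  then have "real ((p - 1) choose s) * fact s / real p ^ s = (\<Prod>i<s. (real p - (real i + 1)) / real p)"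
    unfolding e by (simp add: prod_dividef)
  also have "\<dots> = (\<Prod>i<s. 1 - (real i + 1) / real p)" using assms
    by (intro prod.cong) (auto simp: field_simps)
  finally show ?thesis .
qed

definition Tr :: "nat \<Rightarrow> real" where "Tr s = real s * (real s + 1) / 2"
definition Ar :: "nat \<Rightarrow> real" where "Ar s = Tr s ^ 2 + 4 * real s ^ 2 * fact s"

lemma a_bounds:
  assumes "1 \<le> p" "s \<le> p"
  shows "1 - Tr s / real p \<le> (\<Prod>i<s. 1 - (real i + 1) / real p)"
    "(\<Prod>i<s. 1 - (real i + 1) / real p) \<le> 1 - Tr s / real p + Tr s ^ 2 / real p ^ 2"
    "(\<Prod>i<s. 1 - (real i + 1) / real p) \<le> 1"
proof -
  have x: "\<And>i. i \<in> {..<s} \<Longrightarrow> 0 \<le> (real i + 1) / real p \<and> (real i + 1) / real p \<le> 1"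
    using assms by (auto simp: field_simps)
  have sm: "(\<Sum>i<s. (real i + 1) / real p) = Tr s / real p"
    unfolding Tr_def by (simp add: sum_divide_distrib[symmetric] sum_lin)
  have pb: "1 - Tr s / real p \<le> (\<Prod>i<s. 1 - (real i + 1) / real p) \<and>
      (\<Prod>i<s. 1 - (real i + 1) / real p) \<le> 1 - Tr s / real p + (Tr s / real p)^2/2"
    using prod_bounds[of "{..<s}" "\<lambda>i. (real i + 1) / real p"] x sm by simp
  have "(Tr s / real p)^2/2 \<le> Tr s ^ 2 / real p ^ 2"
  proof -
    have h: "0 \<le> Tr s ^ 2 / real p ^ 2" by simp
    have "(Tr s / real p)^2/2 = (Tr s ^ 2 / real p ^ 2)/2" by (simp add: power_divide)
    moreover have "\<And>A X::real. A = X / 2 \<Longrightarrow> 0 \<le> X \<Longrightarrow> A \<le> X" by linarith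
    ultimately show ?thesis using h by blast
  qed
  then show "1 - Tr s / real p \<le> (\<Prod>i<s. 1 - (real i + 1) / real p)"
    "(\<Prod>i<s. 1 - (real i + 1) / real p) \<le> 1 - Tr s / real p + Tr s ^ 2 / real p ^ 2"
    using pb by linarith+
  show "(\<Prod>i<s. 1 - (real i + 1) / real p) \<le> 1"
    by (rule prod_le_1) (use x in auto)
qed



lemma dim_Nil: "dim_irrep [] = 1"
  unfolding dim_irrep_def SYT_Nil by simp

lemma dim_pos: "sorted_wrt (\<ge>) xs \<Longrightarrow> (\<forall>x\<in>set xs. 0 < x) \<Longrightarrow> 1 \<le> dim_irrep xs"
proof (induction xs)
  case Nil then show ?case by (simp add: dim_Nil)
next
  case (Cons m xs)
  have "1 \<le> dim_irrep xs" using Cons by simp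
  also have "\<dots> \<le> dim_irrep (m # xs)" by (rule comb_main(2)) (use Cons.prems in auto)
  finally show ?case .
qed

lemma dim_le: "dim_irrep xs \<le> sum_list xs ^ sum_list xs"
  unfolding dim_irrep_def using finite_SYT by blast

lemma est:
  assumes srt: "sorted_wrt (\<ge>) (m # xs)" and pos: "\<forall>x\<in>set xs. 0 < x" and m: "1 \<le> m"
  shows "real (dim_irrep (m # xs)) \<le> real (dim_irrep xs) * real (m + sum_list xs) ^ sum_list xs / fact (sum_list xs)"
    "real (dim_irrep xs) \<le> real (dim_irrep (m # xs))"
    "\<exists>\<alpha>. real (dim_irrep (m # xs)) = real (dim_irrep xs) * real (m + sum_list xs) ^ sum_list xs / fact (sum_list xs)
          * (1 - Tr (sum_list xs) / real (m + sum_list xs) + \<alpha>) \<and>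
        \<bar>\<alpha>\<bar> \<le> Ar (sum_list xs) / real (m + sum_list xs) ^ 2"
proof -
  define s where "s = sum_list xs"
  define p where "p = m + s"
  define D where "D = real (dim_irrep (m # xs))"
  define d where "d = real (dim_irrep xs)"
  define C where "C = real ((p - 1) choose s)"
  define a where "a = (\<Prod>i<s. 1 - (real i + 1) / real p)"
  define K where "K = real p ^ s / fact s"
  have p1: "1 \<le> p" and sp: "s \<le> p" using m unfolding p_def by auto
  have srt': "sorted_wrt (\<ge>) xs" using srt by simp
  have d1: "1 \<le> d" unfolding d_def using dim_pos[OF srt' pos] by simp
  have Kpos: "0 < K" unfolding K_def using p1 by simp
  have CK: "C = K * a"
  proof -
    have "C * fact s / real p ^ s = a" unfolding C_def a_def using binom_prod[OF p1] .
    then show ?thesis unfolding K_def using p1 by (simp add: field_simps)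
  qed
  have ab: "1 - Tr s / real p \<le> a" "a \<le> 1 - Tr s / real p + Tr s ^ 2 / real p ^ 2" "a \<le> 1"
    unfolding a_def using a_bounds[OF p1 sp] by auto
  have up: "D \<le> d * C"
    unfolding D_def d_def C_def p_def s_def using comb_main(1)[OF srt m]
    by (metis of_nat_le_iff of_nat_mult)
  have upK: "D \<le> d * K"
  proof -
    have "D \<le> d * (K * a)" using up CK by simp
    also have "\<dots> \<le> d * (K * 1)" using ab(3) Kpos d1 by (intro mult_left_mono) auto
    finally show ?thesis by simp
  qed
  then show "real (dim_irrep (m # xs)) \<le> real (dim_irrep xs) * real (m + sum_list xs) ^ sum_list xs / fact (sum_list xs)"
    unfolding D_def d_def K_def p_def s_def by simp
  show "real (dim_irrep xs) \<le> real (dim_irrep (m # xs))" using comb_main(2)[OF srt m] by simp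
  obtain e where e: "e * p ^ 2 \<le> (2 * s) ^ 2 * p ^ s" "e \<le> ((p - 1) choose s)"
    "dim_irrep xs * (((p - 1) choose s) - e) \<le> dim_irrep (m # xs)"
    using comb_main(3)[OF srt m] unfolding p_def s_def by blast
  have low: "d * (C - real e) \<le> D"
  proof -
    have "real (dim_irrep xs * (((p - 1) choose s) - e)) \<le> D" unfolding D_def using e(3) by linarith
    then show ?thesis unfolding d_def C_def using e(2) by (simp add: of_nat_diff)
  qed
  have eK: "real e / K \<le> 4 * real s ^ 2 * fact s / real p ^ 2"
  proof -
    have "real e * real p ^ 2 \<le> 4 * real s ^ 2 * real p ^ s"
    proof -
      have "real (e * p ^ 2) \<le> real ((2 * s) ^ 2 * p ^ s)" using e(1) by linarith
      then show ?thesis by (simp add: power_mult_distrib)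
    qed
    then have "real e \<le> 4 * real s ^ 2 * real p ^ s / real p ^ 2" using p1 by (simp add: field_simps)
    then have "real e * fact s / real p ^ s \<le> (4 * real s ^ 2 * real p ^ s / real p ^ 2) * fact s / real p ^ s"
      by (intro divide_right_mono mult_right_mono) auto
    also have "\<dots> = 4 * real s ^ 2 * fact s / real p ^ 2" using p1 by (simp add: field_simps)
    finally show ?thesis unfolding K_def by (simp add: field_simps)
  qed
  define \<beta> where "\<beta> = D / (d * K)"
  have dK: "0 < d * K" using d1 Kpos by simp
  have b1: "\<beta> \<le> a"
  proof -
    have "D \<le> (d * K) * a" using up CK by (simp add: mult.assoc)
    then show ?thesis unfolding \<beta>_def using dK by (simp add: divide_le_eq mult.commute)
  qed
  have b2: "a - real e / K \<le> \<beta>"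
  proof -
    have "(d * K) * (a - real e / K) = d * (C - real e)" using CK Kpos by (simp add: field_simps)
    then have "(d * K) * (a - real e / K) \<le> D" using low by linarith
    then show ?thesis unfolding \<beta>_def using dK by (simp add: le_divide_eq mult.commute)
  qed
  define \<alpha> where "\<alpha> = \<beta> - (1 - Tr s / real p)"
  have Deq: "D = d * K * (1 - Tr s / real p + \<alpha>)" unfolding \<alpha>_def \<beta>_def using d1 Kpos by simp
  have Tr0: "0 \<le> Tr s ^ 2 / real p ^ 2" by simp
  have F0: "0 \<le> 4 * real s ^ 2 * fact s / real p ^ 2" by simp
  have "\<bar>\<alpha>\<bar> \<le> Tr s ^ 2 / real p ^ 2 + 4 * real s ^ 2 * fact s / real p ^ 2"
    unfolding \<alpha>_def using b1 b2 ab eK Tr0 F0 by linarith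
  also have "\<dots> = Ar s / real p ^ 2" unfolding Ar_def by (simp add: add_divide_distrib)
  finally have "\<bar>\<alpha>\<bar> \<le> Ar s / real p ^ 2" .
  then have bnd: "\<bar>\<alpha>\<bar> \<le> Ar (sum_list xs) / real (m + sum_list xs) ^ 2" unfolding p_def s_def .
  have dKe: "d * K = real (dim_irrep xs) * real (m + sum_list xs) ^ sum_list xs / fact (sum_list xs)"
    unfolding d_def K_def p_def s_def by simp
  have Deq2: "real (dim_irrep (m # xs)) = real (dim_irrep xs) * real (m + sum_list xs) ^ sum_list xs / fact (sum_list xs)
          * (1 - Tr (sum_list xs) / real (m + sum_list xs) + \<alpha>)"
    using Deq unfolding dKe[symmetric] D_def p_def s_def .
  show "\<exists>\<alpha>. real (dim_irrep (m # xs)) = real (dim_irrep xs) * real (m + sum_list xs) ^ sum_list xs / fact (sum_list xs)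
          * (1 - Tr (sum_list xs) / real (m + sum_list xs) + \<alpha>) \<and>
        \<bar>\<alpha>\<bar> \<le> Ar (sum_list xs) / real (m + sum_list xs) ^ 2"
    using Deq2 bnd by blast
qed



lemma E_bound:
  fixes f n T A \<alpha> \<beta> :: real
  assumes f1: "1 \<le> f" and fn: "f \<le> n" and a: "\<bar>\<alpha>\<bar> \<le> A / f^2" and b: "\<bar>\<beta>\<bar> \<le> A / n^2"
    and v: "1/2 \<le> 1 - T / n + \<beta>" and T0: "0 \<le> T" and A0: "0 \<le> A"
  shows "\<bar>(1 - T / f + \<alpha>) / (1 - T / n + \<beta>) - (1 - T * (n - f) / (f * n))\<bar>
          \<le> 2 * (A + 2 * T^2 + A * (1 + T)) / f^2"
proof -
  define G where "G = 1 / f^2"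
  define u where "u = 1 - T / f + \<alpha>"
  define v where "v = 1 - T / n + \<beta>"
  define w where "w = 1 - T / f + T / n"
  have n1: "1 \<le> n" using f1 fn by simp
  have fpos: "0 < f" and npos: "0 < n" using f1 n1 by auto
  have G0: "0 \<le> G" unfolding G_def by simp
  have w_eq: "1 - T * (n - f) / (f * n) = w" unfolding w_def using fpos npos by (simp add: field_simps)
  have key: "u - v * w = \<alpha> - T^2 * (1 / (f * n)) + T^2 * (1 / n^2) - \<beta> * w"
    unfolding u_def v_def w_def using fpos npos by (simp add: field_simps power2_eq_square)
  have g1: "1 / (f * n) \<le> G" unfolding G_def using fpos fn
    by (simp add: field_simps power2_eq_square mult_left_mono)
  have g2: "1 / n^2 \<le> G" unfolding G_def using fpos fn
    by (simp add: field_simps power_mono)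
  have aG: "\<bar>\<alpha>\<bar> \<le> A * G" using a unfolding G_def by simp
  have bG: "\<bar>\<beta>\<bar> \<le> A * G"
  proof -
    have "A / n^2 = A * (1 / n^2)" by simp
    also have "\<dots> \<le> A * G" using g2 A0 by (intro mult_left_mono) auto
    finally show ?thesis using b by simp
  qed
  have wb: "\<bar>w\<bar> \<le> 1 + T"
  proof -
    have "T / f \<le> T" using f1 T0 by (simp add: divide_le_eq mult_le_cancel_left1 mult.commute)
    moreover have "T / n \<le> T" using n1 T0 by (simp add: divide_le_eq mult_le_cancel_left1 mult.commute)
    moreover have "0 \<le> T / f" "0 \<le> T / n" using T0 fpos npos by auto
    ultimately show ?thesis unfolding w_def by linarith
  qed
  have t1: "T^2 * (1 / (f * n)) \<le> T^2 * G" using g1 by (intro mult_left_mono) auto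
  have t1': "0 \<le> T^2 * (1 / (f * n))" using fpos npos by simp
  have t2: "T^2 * (1 / n^2) \<le> T^2 * G" using g2 by (intro mult_left_mono) auto
  have t2': "0 \<le> T^2 * (1 / n^2)" by simp
  have bw: "\<bar>\<beta> * w\<bar> \<le> A * G * (1 + T)" unfolding abs_mult
    by (rule mult_mono[OF bG wb]) (use A0 G0 in auto)
  have num: "\<bar>u - v * w\<bar> \<le> (A + 2 * T^2 + A * (1 + T)) * G"
  proof -
    have tri: "\<And>a X Y Z::real. 0 \<le> X \<Longrightarrow> 0 \<le> Y \<Longrightarrow> \<bar>a - X + Y - Z\<bar> \<le> \<bar>a\<bar> + X + Y + \<bar>Z\<bar>"
    proof -
      fix a X Y Z :: real assume "0 \<le> X" "0 \<le> Y"
      moreover have "a \<le> \<bar>a\<bar>" "- a \<le> \<bar>a\<bar>" "Z \<le> \<bar>Z\<bar>" "- Z \<le> \<bar>Z\<bar>" by auto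
      ultimately show "\<bar>a - X + Y - Z\<bar> \<le> \<bar>a\<bar> + X + Y + \<bar>Z\<bar>" unfolding abs_le_iff by linarith
    qed
    have "\<bar>u - v * w\<bar> \<le> \<bar>\<alpha>\<bar> + T^2 * (1 / (f * n)) + T^2 * (1 / n^2) + \<bar>\<beta> * w\<bar>"
      unfolding key by (rule tri[OF t1' t2'])
    also have "\<dots> \<le> A * G + T^2 * G + T^2 * G + A * G * (1 + T)" using aG t1 t2 bw by linarith
    also have "\<dots> = (A + 2 * T^2 + A * (1 + T)) * G" by (simp add: algebra_simps)
    finally show ?thesis .
  qed
  have vpos: "1/2 \<le> v" using v unfolding v_def .
  have "u / v - w = (u - v * w) / v" using vpos by (simp add: field_simps)
  then have "\<bar>u / v - w\<bar> = \<bar>u - v * w\<bar> / v" using vpos by simp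
  also have "\<dots> \<le> \<bar>u - v * w\<bar> / (1/2)" using vpos by (intro divide_left_mono) auto
  also have "\<dots> \<le> 2 * ((A + 2 * T^2 + A * (1 + T)) * G)" using num by simp
  finally show ?thesis unfolding u_def v_def w_eq[symmetric] G_def by simp
qed



lemma part_dec:
  assumes "is_partition p lam" "1 \<le> p"
  shows "\<exists>m xs. lam = m # xs \<and> sorted_wrt (\<ge>) (m # xs) \<and> (\<forall>x\<in>set xs. 0 < x) \<and> 1 \<le> m \<and>
           first_row lam = m \<and> m + sum_list xs = p"
proof (cases lam)
  case Nil then show ?thesis using assms unfolding is_partition_def by simp
next
  case (Cons m xs)
  then show ?thesis using assms unfolding is_partition_def first_row_def
    by (intro exI[of _ m] exI[of _ xs]) auto
qed

lemma part_zero: "is_partition 0 lam \<Longrightarrow> lam = []"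
  unfolding is_partition_def by (cases lam) auto

lemma cells_eq:
  assumes px: "\<forall>x\<in>set xs. 0 < x" and py: "\<forall>x\<in>set ys. 0 < x" and e: "young_cells xs = young_cells ys"
  shows "xs = ys"
proof -
  have l: "\<And>zs i. (\<forall>x\<in>set zs. 0 < x) \<Longrightarrow> (i, 0) \<in> young_cells zs \<longleftrightarrow> i < length zs"
    unfolding young_cells_def by auto
  have len: "length xs = length ys"
  proof (rule ccontr)
    assume "length xs \<noteq> length ys"
    then consider "length xs < length ys" | "length ys < length xs" by linarith
    then show False
    proof cases
      case 1 then have "(length xs, 0) \<in> young_cells ys" using l[OF py] by simp
      then show False using e l[OF px] by simp
    next
      case 2 then have "(length ys, 0) \<in> young_cells xs" using l[OF px] by simp
      then show False using e l[OF py] by simp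
    qed
  qed
  show ?thesis
  proof (rule nth_equalityI[OF len])
    fix i assume i: "i < length xs"
    have "\<And>j. j < xs ! i \<longleftrightarrow> j < ys ! i"
    proof -
      fix j
      have "j < xs ! i \<longleftrightarrow> (i, j) \<in> young_cells xs" using i unfolding young_cells_def by auto
      also have "\<dots> \<longleftrightarrow> (i, j) \<in> young_cells ys" using e by simp
      also have "\<dots> \<longleftrightarrow> j < ys ! i" using i len unfolding young_cells_def by auto
      finally show "j < xs ! i \<longleftrightarrow> j < ys ! i" .
    qed
    then show "xs ! i = ys ! i" by (metis less_irrefl nat_neq_iff)
  qed
qed

lemma tail_eq:
  assumes "\<forall>x\<in>set xs. 0 < x" "\<forall>x\<in>set ys. 0 < x" "young_cells ys \<subseteq> young_cells xs"
    "sum_list ys = sum_list xs"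
  shows "ys = xs"
proof -
  have "young_cells ys = young_cells xs"
    using assms(3,4) by (intro card_subset_eq) (auto simp: card_young_cells)
  then show ?thesis using cells_eq assms(1,2) by metis
qed

lemma Tr_mono: "s \<le> r \<Longrightarrow> Tr s \<le> Tr r"
  unfolding Tr_def by (intro divide_right_mono mult_mono) auto

lemma Tr_nonneg: "0 \<le> Tr s" unfolding Tr_def by simp

lemma Ar_mono: "s \<le> r \<Longrightarrow> Ar s \<le> Ar r"
proof -
  assume sr: "s \<le> r"
  have "Tr s ^ 2 \<le> Tr r ^ 2" using Tr_mono[OF sr] Tr_nonneg by (intro power_mono) auto
  moreover have "real s ^ 2 * fact s \<le> real r ^ 2 * (fact r :: real)"
    using sr by (intro mult_mono power_mono fact_mono) auto
  ultimately show ?thesis unfolding Ar_def by simp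
qed

lemma Ar_nonneg: "0 \<le> Ar s" unfolding Ar_def by simp

lemma thr:
  assumes p1: "1 \<le> p" and pT: "4 * (Tr r + Ar r) \<le> p" and sr: "s \<le> r" and a: "\<bar>\<alpha>\<bar> \<le> Ar s / p ^ 2"
  shows "1/2 \<le> 1 - Tr s / p + \<alpha>"
proof -
  have ppos: "0 < p" using p1 by simp
  have "Tr s / p \<le> Tr r / p" using Tr_mono[OF sr] ppos by (simp add: divide_right_mono)
  moreover have "Ar s / p ^ 2 \<le> Ar r / p"
  proof -
    have "Ar s / p ^ 2 \<le> Ar r / p ^ 2" using Ar_mono[OF sr] ppos by (simp add: divide_right_mono)
    also have "\<dots> \<le> Ar r / p" using Ar_nonneg[of r] p1
      by (intro divide_left_mono) (auto simp: power2_eq_square intro: order_trans[of _ p])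
    finally show ?thesis .
  qed
  moreover have "Tr r / p + Ar r / p \<le> 1/4"
  proof -
    have "Tr r / p + Ar r / p = (Tr r + Ar r) / p" by (simp add: add_divide_distrib)
    also have "\<dots> \<le> 1/4" using pT ppos by (simp add: divide_le_eq)
    finally show ?thesis .
  qed
  ultimately show ?thesis using a by linarith
qed



lemma div_le_self_real: fixes X F :: real assumes "0 \<le> X" "1 \<le> F" shows "X / F \<le> X"
proof -
  have "X * 1 \<le> X * F" using assms by (intro mult_left_mono) auto
  then show ?thesis using assms by (simp add: divide_le_eq)
qed

theorem lemma2p9:
  fixes r :: nat
  shows "\<exists>c C :: real. \<exists>N :: nat. 0 < c \<and> c \<le> C \<and>
    (\<forall>n K f lam mu. n \<ge> N \<longrightarrow> K \<le> r \<longrightarrow> 2 * r \<le> f \<longrightarrow> f \<le> n \<longrightarrow>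
       is_partition n lam \<longrightarrow> n - first_row lam = r \<longrightarrow>
       is_partition f mu \<longrightarrow> contained mu lam \<longrightarrow> f - first_row mu = r - K \<longrightarrow>
       (let q = real (dim_irrep mu) / real (dim_irrep lam) in
          c * (real f / real n) ^ r * real f powi (- int K) \<le> q \<and>
          q \<le> C * (real f / real n) ^ r * real f powi (- int K) \<and>
          (K = 0 \<longrightarrow> (\<exists>E :: real.
              q = (real f / real n) ^ r *
                  (1 - real (r * (r + 1)) / 2 * (real (n - f) / (real f * real n)) + E)
              \<and> \<bar>E\<bar> \<le> C / real f ^ 2))))"
proof -
  define T where "T = Tr r"
  define A where "A = Ar r"
  define R where "R = real r ^ r"
  define Fc where "Fc = (fact r :: real)"
  define N where "N = nat \<lceil>4 * (T + A)\<rceil> + 1"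
  define c0 where "c0 = min (1 / (2 * Fc)) (1 / real N ^ r)"
  define c where "c = c0 / R"
  define C where "C = max (max (2 * Fc * R) (2 * (A + 2 * T^2 + A * (1 + T)))) 1"
  have T0: "0 \<le> T" unfolding T_def by (rule Tr_nonneg)
  have A0: "0 \<le> A" unfolding A_def by (rule Ar_nonneg)
  have R1: "1 \<le> R" unfolding R_def by (cases "r = 0") auto
  have Fc1: "1 \<le> Fc" unfolding Fc_def by (rule fact_ge_1)
  have N1: "1 \<le> N" unfolding N_def by simp
  have NT: "4 * (T + A) \<le> real N" unfolding N_def using real_nat_ceiling_ge[of "4 * (T + A)"] by simp
  have c0pos: "0 < c0" unfolding c0_def using Fc1 N1 by simp
  have c0a: "c0 \<le> 1 / (2 * Fc)" and c0b: "c0 \<le> 1 / real N ^ r" unfolding c0_def by auto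
  have cpos: "0 < c" unfolding c_def using c0pos R1 by simp
  have c1: "c \<le> 1"
  proof -
    have "c \<le> c0" unfolding c_def using c0pos R1 by (simp add: divide_le_eq mult_le_cancel_left1)
    also have "\<dots> \<le> 1 / (2 * Fc)" by (rule c0a)
    also have "\<dots> \<le> 1" using Fc1 by simp
    finally show ?thesis .
  qed
  have C1: "1 \<le> C" unfolding C_def by simp
  have CU: "2 * Fc * R \<le> C" unfolding C_def by simp
  have CE: "2 * (A + 2 * T^2 + A * (1 + T)) \<le> C" unfolding C_def by simp
  show ?thesis
  proof (rule exI[of _ c], rule exI[of _ C], rule exI[of _ N], intro conjI allI impI)
    show "0 < c" by (rule cpos)
    show "c \<le> C" using c1 C1 by simp
    fix n K f lam mu
    assume nN: "N \<le> n" and Kr: "K \<le> r" and rf: "2 * r \<le> f" and fn: "f \<le> n"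
      and plam: "is_partition n lam" and lr: "n - first_row lam = r"
      and pmu: "is_partition f mu" and cont: "contained mu lam" and mr: "f - first_row mu = r - K"
    have n1: "1 \<le> n" using nN N1 by simp
    obtain m xs where lam: "lam = m # xs" "sorted_wrt (\<ge>) (m # xs)" "\<forall>x\<in>set xs. 0 < x" "1 \<le> m"
      "first_row lam = m" "m + sum_list xs = n"
      using part_dec[OF plam n1] by blast
    have hr: "sum_list xs = r" using lam(5,6) lr by simp
    have hmr: "m + r = n" using lam(6) hr by simp
    show "let q = real (dim_irrep mu) / real (dim_irrep lam) in
          c * (real f / real n) ^ r * real f powi (- int K) \<le> q \<and>
          q \<le> C * (real f / real n) ^ r * real f powi (- int K) \<and>
          (K = 0 \<longrightarrow> (\<exists>E :: real.
              q = (real f / real n) ^ r *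
                  (1 - real (r * (r + 1)) / 2 * (real (n - f) / (real f * real n)) + E)
              \<and> \<bar>E\<bar> \<le> C / real f ^ 2))"
    proof (cases "f = 0")
      case True
      have r0: "r = 0" and K0: "K = 0" using True rf Kr by auto
      have mu0: "mu = []" using part_zero pmu True by simp
      have xs0: "xs = []" using hr r0 lam(3) by (cases xs) auto
      have "real (dim_irrep lam) \<le> real (dim_irrep xs) * real (m + sum_list xs) ^ sum_list xs / fact (sum_list xs)"
        using est(1)[OF lam(2,3,4)] lam(1) by simp
      then have Dl1: "real (dim_irrep lam) \<le> 1" using xs0 dim_Nil by simp
      have "real (dim_irrep xs) \<le> real (dim_irrep lam)" using est(2)[OF lam(2,3,4)] lam(1) by simp
      then have "1 \<le> real (dim_irrep lam)" using xs0 dim_Nil by simp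
      then have Dl: "dim_irrep lam = 1" using Dl1 by linarith
      have Dm: "dim_irrep mu = 1" using mu0 dim_Nil by simp
      show ?thesis unfolding Let_def using Dl Dm True r0 K0 c1 C1 by simp
    next
      case False
      then have f1: "1 \<le> f" by simp
      obtain m' xs' where mu: "mu = m' # xs'" "sorted_wrt (\<ge>) (m' # xs')" "\<forall>x\<in>set xs'. 0 < x" "1 \<le> m'"
        "first_row mu = m'" "m' + sum_list xs' = f"
        using part_dec[OF pmu f1] by blast
      define s where "s = r - K"
      have hs: "sum_list xs' = s" using mu(5,6) mr unfolding s_def by simp

      have sr: "s \<le> r" and sK: "s + K = r" unfolding s_def using Kr by auto
      have hms: "m' + s = f" using mu(6) hs by simp
      have srt': "sorted_wrt (\<ge>) xs" using lam(2) by simp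
      have srtm': "sorted_wrt (\<ge>) xs'" using mu(2) by simp
      have Dl_up: "real (dim_irrep lam) \<le> real (dim_irrep xs) * real n ^ r / Fc"
        using est(1)[OF lam(2,3,4), unfolded lam(6) hr hmr] lam(1) unfolding Fc_def by simp
      have dl_le: "real (dim_irrep xs) \<le> real (dim_irrep lam)"
        using est(2)[OF lam(2,3,4)] lam(1) by simp
      obtain \<beta> where \<beta>: "real (dim_irrep lam) = real (dim_irrep xs) * real n ^ r / Fc * (1 - T / real n + \<beta>)"
        "\<bar>\<beta>\<bar> \<le> A / real n ^ 2"
        using est(3)[OF lam(2,3,4), unfolded lam(6) hr hmr] lam(1) unfolding Fc_def T_def A_def by auto
      have dl1: "1 \<le> real (dim_irrep xs)" using dim_pos[OF srt' lam(3)] by simp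
      have dlR: "real (dim_irrep xs) \<le> R"
      proof -
        have "dim_irrep xs \<le> r ^ r" using dim_le[of xs] hr by simp
        then show ?thesis unfolding R_def by (metis of_nat_le_iff of_nat_power)
      qed
      have nT: "4 * (Tr r + Ar r) \<le> real n" using NT nN unfolding T_def A_def by simp
      have vl: "1/2 \<le> 1 - T / real n + \<beta>"
        unfolding T_def by (rule thr[OF _ nT order_refl]) (use n1 \<beta>(2) in \<open>auto simp: A_def\<close>)
      have npos: "0 < real n" using n1 by simp
      have Dl_low: "real n ^ r / (2 * Fc) \<le> real (dim_irrep lam)"
      proof -
        have "real n ^ r / (2 * Fc) = 1 * (real n ^ r / Fc) * (1/2)" by simp
        also have "\<dots> \<le> real (dim_irrep xs) * (real n ^ r / Fc) * (1 - T / real n + \<beta>)"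
          using dl1 vl Fc1 npos by (intro mult_mono) auto
        also have "\<dots> = real (dim_irrep lam)" using \<beta>(1) by simp
        finally show ?thesis .
      qed
      have Dl_up2: "real (dim_irrep lam) \<le> R * real n ^ r"
      proof -
        have "real (dim_irrep xs) * real n ^ r / Fc \<le> real (dim_irrep xs) * real n ^ r"
          using Fc1 dl1 npos by (intro div_le_self_real) auto
        also have "\<dots> \<le> R * real n ^ r" using dlR npos by (intro mult_right_mono) auto
        finally show ?thesis using Dl_up by linarith
      qed
      have Dlpos: "0 < real (dim_irrep lam)" using dl_le dl1 by linarith
      have Dm_up: "real (dim_irrep mu) \<le> real (dim_irrep xs') * real f ^ s / fact s"
        using est(1)[OF mu(2,3,4), unfolded mu(6) hs hms] mu(1) by simp
      have dm_le: "real (dim_irrep xs') \<le> real (dim_irrep mu)"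
        using est(2)[OF mu(2,3,4)] mu(1) by simp
      obtain \<alpha> where \<alpha>: "real (dim_irrep mu) = real (dim_irrep xs') * real f ^ s / fact s * (1 - Tr s / real f + \<alpha>)"
        "\<bar>\<alpha>\<bar> \<le> Ar s / real f ^ 2"
        using est(3)[OF mu(2,3,4), unfolded mu(6) hs hms] mu(1) by auto
      have dm1: "1 \<le> real (dim_irrep xs')" using dim_pos[OF srtm' mu(3)] by simp
      have dmR: "real (dim_irrep xs') \<le> R"
      proof -
        have "dim_irrep xs' \<le> s ^ s" using dim_le[of xs'] hs by simp
        also have "s ^ s \<le> r ^ r"
        proof (cases "s = 0")
          case True then show ?thesis by (cases "r = 0") auto
        next
          case False
          then have "s ^ s \<le> r ^ s" using sr by (intro power_mono) auto
          also have "\<dots> \<le> r ^ r" using sr False by (intro power_increasing) auto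
          finally show ?thesis .
        qed
        finally show ?thesis unfolding R_def by (metis of_nat_le_iff of_nat_power)
      qed
      have fpos: "0 < real f" using f1 by simp
      have fsFc: "fact s \<le> Fc" unfolding Fc_def using sr by (rule fact_mono)
      have fs1: "(1::real) \<le> fact s" by (rule fact_ge_1)
      have Dm_up2: "real (dim_irrep mu) \<le> R * real f ^ s"
      proof -
        have "real (dim_irrep xs') * real f ^ s / fact s \<le> real (dim_irrep xs') * real f ^ s"
          using fs1 dm1 fpos by (intro div_le_self_real) auto
        also have "\<dots> \<le> R * real f ^ s" using dmR fpos by (intro mult_right_mono) auto
        finally show ?thesis using Dm_up by linarith
      qed
      have Dm_low: "c0 * real f ^ s \<le> real (dim_irrep mu)"
      proof (cases "N \<le> f")
        case True
        have fT: "4 * (Tr r + Ar r) \<le> real f" using NT True unfolding T_def A_def by simp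
        have vm: "1/2 \<le> 1 - Tr s / real f + \<alpha>" by (rule thr[OF _ fT sr \<alpha>(2)]) (use f1 in simp)
        have "c0 * real f ^ s \<le> real f ^ s / (2 * Fc)" using c0a fpos
          by (metis divide_divide_eq_left' mult_right_mono zero_le_power less_imp_le times_divide_eq_left mult_1 mult.commute)
        also have "\<dots> \<le> 1 * (real f ^ s / fact s) * (1/2)"
          using fsFc fs1 fpos by (simp add: frac_le)
        also have "\<dots> \<le> real (dim_irrep xs') * (real f ^ s / fact s) * (1 - Tr s / real f + \<alpha>)"
          using dm1 vm fs1 fpos by (intro mult_mono) auto
        also have "\<dots> = real (dim_irrep mu)" using \<alpha>(1) by simp
        finally show ?thesis .
      next
        case False
        have "real f ^ s \<le> real N ^ s" using False fpos by (intro power_mono) auto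
        also have "\<dots> \<le> real N ^ r" using sr N1 by (intro power_increasing) auto
        finally have fN: "real f ^ s \<le> real N ^ r" .
        have "c0 * real f ^ s \<le> (1 / real N ^ r) * real N ^ r"
          using c0b fN c0pos fpos by (intro mult_mono) auto
        also have "\<dots> = 1" using N1 by simp
        also have "\<dots> \<le> real (dim_irrep mu)" using dm1 dm_le by linarith
        finally show ?thesis .
      qed
      have X: "(real f / real n) ^ r * real f powi (- int K) = real f ^ s / real n ^ r"
      proof -
        have "real f powi (- int K) = 1 / real f ^ K" by (simp add: power_int_minus divide_inverse)
        moreover have "real f ^ r = real f ^ s * real f ^ K" using sK by (metis power_add)
        ultimately show ?thesis using fpos by (simp add: power_divide)
      qed
      let ?q = "real (dim_irrep mu) / real (dim_irrep lam)"
      have lowq: "c * (real f / real n) ^ r * real f powi (- int K) \<le> ?q"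
      proof -
        have "c * (real f / real n) ^ r * real f powi (- int K) = (c0 * real f ^ s) / (R * real n ^ r)"
          using X unfolding c_def by (simp add: mult.assoc)
        also have "\<dots> \<le> real (dim_irrep mu) / real (dim_irrep lam)"
          using Dm_low Dl_up2 Dlpos c0pos fpos by (intro frac_le) auto
        finally show ?thesis .
      qed
      have upq: "?q \<le> C * (real f / real n) ^ r * real f powi (- int K)"
      proof -
        have "?q \<le> (R * real f ^ s) / (real n ^ r / (2 * Fc))"
          using Dm_up2 Dl_low Dlpos fpos npos Fc1 by (intro frac_le) auto
        also have "\<dots> = (2 * Fc * R) * (real f ^ s / real n ^ r)" by (simp add: field_simps)
        also have "\<dots> \<le> C * (real f ^ s / real n ^ r)" using CU fpos npos by (intro mult_right_mono) auto
        also have "\<dots> = C * (real f / real n) ^ r * real f powi (- int K)" using X by (simp add: mult.assoc)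
        finally show ?thesis .
      qed
      have Epart: "K = 0 \<longrightarrow> (\<exists>E :: real. ?q = (real f / real n) ^ r *
                  (1 - real (r * (r + 1)) / 2 * (real (n - f) / (real f * real n)) + E)
              \<and> \<bar>E\<bar> \<le> C / real f ^ 2)"
      proof
        assume K0: "K = 0"
        then have sr0: "s = r" unfolding s_def by simp
        have "young_cells xs' \<subseteq> young_cells xs"
        proof
          fix x assume "x \<in> young_cells xs'"
          then obtain i j where "x = (i, j)" "(Suc i, j) \<in> young_cells mu" using mu(1) by (cases x) auto
          then have "(Suc i, j) \<in> young_cells lam" using cont unfolding contained_def by auto
          then show "x \<in> young_cells xs" using lam(1) \<open>x = (i, j)\<close> by simp
        qed
        then have xeq: "xs' = xs" using tail_eq[OF lam(3) mu(3)] hs hr sr0 by simp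
        define u where "u = 1 - T / real f + \<alpha>"
        define v where "v = 1 - T / real n + \<beta>"
        have Dm_eq: "real (dim_irrep mu) = real (dim_irrep xs) * real f ^ r / Fc * u"
          using \<alpha>(1) unfolding u_def sr0 xeq T_def Fc_def .
        have Dl_eq: "real (dim_irrep lam) = real (dim_irrep xs) * real n ^ r / Fc * v"
          using \<beta>(1) unfolding v_def .
        have vpos: "0 < v" using vl unfolding v_def by linarith
        have qe: "?q = (real f / real n) ^ r * (u / v)"
          unfolding Dm_eq Dl_eq using dl1 Fc1 npos vpos by (simp add: field_simps power_divide)
        define E where "E = u / v - (1 - T * (real f - real f + (real n - real f)) / (real f * real n))"
        have Tr_eq: "real (r * (r + 1)) / 2 = T" unfolding T_def Tr_def by (simp add: algebra_simps)
        have nf: "real (n - f) = real n - real f" using fn by (simp add: of_nat_diff)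
        have qE: "?q = (real f / real n) ^ r *
                  (1 - real (r * (r + 1)) / 2 * (real (n - f) / (real f * real n)) + E)"
          unfolding qe E_def Tr_eq nf by simp
        have aA: "\<bar>\<alpha>\<bar> \<le> A / real f ^ 2" using \<alpha>(2) unfolding sr0 A_def .
        have "\<bar>E\<bar> \<le> 2 * (A + 2 * T^2 + A * (1 + T)) / real f ^ 2"
          unfolding E_def u_def v_def using E_bound[OF _ _ aA \<beta>(2) vl T0 A0] f1 fn by simp
        also have "\<dots> \<le> C / real f ^ 2" using CE fpos by (simp add: divide_right_mono)
        finally show "\<exists>E :: real. ?q = (real f / real n) ^ r *
                  (1 - real (r * (r + 1)) / 2 * (real (n - f) / (real f * real n)) + E)
              \<and> \<bar>E\<bar> \<le> C / real f ^ 2" using qE by blast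
      qed
      show ?thesis unfolding Let_def using lowq upq Epart by blast

    qed
  qed
qed

end
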